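(* Let $G$ be a finite group, $\varphi\in\mathrm{Aut}(G)$, and $U$ a subgroup with $\Delta(G,\varphi)\leq U\leq G\times G$. Then for $i\in\{1,2\}$ one has $k_i(U')=[k_i(U),G]$.
   Context: $\Delta(G,\varphi)=\{(g,\varphi(g)):g\in G\}\leq G\times G$ (twisted diagonal subgroup). For $U\leq G\times G$: $k_1(U)=\{g:(g,1)\in U\}$, $k_2(U)=\{h:(1,h)\in U\}$. $U'$ denotes the commutator subgroup of $U$, and $[X,G]$ the subgroup generated by commutators $[x,g]$, $x\in X$, $g\in G$. *)

theory Defs
  imports "HOL-Algebra.Algebra"
begin

definition twisted_diag :: "('a, 'b) monoid_scheme \<Rightarrow> ('a \<Rightarrow> 'a) \<Rightarrow> ('a \<times> 'a) set" where
  "twisted_diag G \<phi> = {(g, \<phi> g) | g. g \<in> carrier G}"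

definition k1 :: "('a, 'b) monoid_scheme \<Rightarrow> ('a \<times> 'a) set \<Rightarrow> 'a set" where
  "k1 G U = {g \<in> carrier G. (g, \<one>\<^bsub>G\<^esub>) \<in> U}"

definition k2 :: "('a, 'b) monoid_scheme \<Rightarrow> ('a \<times> 'a) set \<Rightarrow> 'a set" where
  "k2 G U = {h \<in> carrier G. (\<one>\<^bsub>G\<^esub>, h) \<in> U}"

definition comm_subgroup :: "('a, 'b) monoid_scheme \<Rightarrow> 'a set \<Rightarrow> 'a set" where
  "comm_subgroup G A = generate G
     (\<Union>x\<in>A. \<Union>g\<in>carrier G. {((inv\<^bsub>G\<^esub> x) \<otimes>\<^bsub>G\<^esub> (inv\<^bsub>G\<^esub> g)) \<otimes>\<^bsub>G\<^esub> x \<otimes>\<^bsub>G\<^esub> g})"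

end

theory Submission
  imports Defs
begin

context group begin
lemma canc1: "x \<in> carrier G \<Longrightarrow> y \<in> carrier G \<Longrightarrow> x \<otimes> (inv x \<otimes> y) = y"
  by (simp add: m_assoc[symmetric])
lemma canc2: "x \<in> carrier G \<Longrightarrow> y \<in> carrier G \<Longrightarrow> inv x \<otimes> (x \<otimes> y) = y"
  by (simp add: m_assoc[symmetric])
lemmas gnorm = m_assoc inv_mult_group canc1 canc2

lemma conj_comm:
  assumes "x \<in> carrier G" "g \<in> carrier G" "h \<in> carrier G"
  shows "h \<otimes> (inv x \<otimes> inv g \<otimes> x \<otimes> g) \<otimes> inv h =
    inv (h \<otimes> x \<otimes> inv h) \<otimes> inv (h \<otimes> g \<otimes> inv h) \<otimes> (h \<otimes> x \<otimes> inv h) \<otimes> (h \<otimes> g \<otimes> inv h)"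
  using assms by (simp add: gnorm)

lemma comm_one_imp:
  assumes "x \<in> carrier G" "z \<in> carrier G" "inv x \<otimes> inv z \<otimes> x \<otimes> z = \<one>"
  shows "x \<otimes> z = z \<otimes> x"
proof -
  have "z \<otimes> x \<otimes> (inv x \<otimes> inv z \<otimes> x \<otimes> z) = x \<otimes> z" using assms(1,2) by (simp add: gnorm)
  thus ?thesis using assms by simp
qed

lemma comm_central:
  assumes c: "B \<in> carrier G" "D \<in> carrier G" "Xc \<in> carrier G" "Yc \<in> carrier G"
    and Xc: "\<And>z. z \<in> carrier G \<Longrightarrow> Xc \<otimes> z = z \<otimes> Xc"
    and Yc: "\<And>z. z \<in> carrier G \<Longrightarrow> Yc \<otimes> z = z \<otimes> Yc"
  shows "(B \<otimes> Xc) \<otimes> (D \<otimes> Yc) \<otimes> inv (B \<otimes> Xc) \<otimes> inv (D \<otimes> Yc) = B \<otimes> D \<otimes> inv B \<otimes> inv D"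
proof -
  have 1: "(B \<otimes> Xc) \<otimes> (D \<otimes> Yc) = (B \<otimes> D) \<otimes> (Xc \<otimes> Yc)"
    using c Xc[of D] by (metis m_assoc m_closed)
  have 2: "(D \<otimes> Yc) \<otimes> (B \<otimes> Xc) = (D \<otimes> B) \<otimes> (Xc \<otimes> Yc)"
    using c Yc[of B] Yc[of Xc] by (metis m_assoc m_closed)
  have 3: "inv (B \<otimes> Xc) \<otimes> inv (D \<otimes> Yc) = inv ((D \<otimes> Yc) \<otimes> (B \<otimes> Xc))"
    using c by (simp add: inv_mult_group)
  have "(B \<otimes> Xc) \<otimes> (D \<otimes> Yc) \<otimes> inv (B \<otimes> Xc) \<otimes> inv (D \<otimes> Yc)
     = ((B \<otimes> D) \<otimes> (Xc \<otimes> Yc)) \<otimes> inv ((D \<otimes> B) \<otimes> (Xc \<otimes> Yc))"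
    using c 1 2 3 by (simp add: m_assoc)
  also have "\<dots> = B \<otimes> D \<otimes> inv B \<otimes> inv D" using c by (simp add: gnorm)
  finally show ?thesis .
qed
end

lemma k1_sub:
  assumes "group G" "group H" "subgroup V (G \<times>\<times> H)"
  shows "subgroup {g \<in> carrier G. (g, \<one>\<^bsub>H\<^esub>) \<in> V} G"
proof -
  interpret G: group G by fact
  interpret H: group H by fact
  interpret V: subgroup V "G \<times>\<times> H" by fact
  show ?thesis
  proof (rule G.subgroupI)
    show "{g \<in> carrier G. (g, \<one>\<^bsub>H\<^esub>) \<in> V} \<noteq> {}"
      using V.one_closed by auto
  next
    fix a assume a: "a \<in> {g \<in> carrier G. (g, \<one>\<^bsub>H\<^esub>) \<in> V}"
    then have "inv\<^bsub>G \<times>\<times> H\<^esub> (a, \<one>\<^bsub>H\<^esub>) \<in> V" by (intro V.m_inv_closed) auto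
    then show "inv\<^bsub>G\<^esub> a \<in> {g \<in> carrier G. (g, \<one>\<^bsub>H\<^esub>) \<in> V}"
      using a by (simp add: inv_DirProd[OF assms(1,2)])
  next
    fix a b assume "a \<in> {g \<in> carrier G. (g, \<one>\<^bsub>H\<^esub>) \<in> V}" "b \<in> {g \<in> carrier G. (g, \<one>\<^bsub>H\<^esub>) \<in> V}"
    then show "a \<otimes>\<^bsub>G\<^esub> b \<in> {g \<in> carrier G. (g, \<one>\<^bsub>H\<^esub>) \<in> V}"
      using V.m_closed[of "(a, \<one>\<^bsub>H\<^esub>)" "(b, \<one>\<^bsub>H\<^esub>)"] by auto
  qed auto
qed

lemma k1_main:
  fixes G (structure)
  assumes grp: "group G" and U: "subgroup U (G \<times>\<times> G)" and sig: "\<sigma> \<in> hom G G"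
    and sec: "\<And>b. b \<in> carrier G \<Longrightarrow> (\<sigma> b, b) \<in> U"
    and sur: "\<And>h. h \<in> carrier G \<Longrightarrow> \<exists>b\<in>carrier G. (h, b) \<in> U"
  shows "k1 G (derived (G \<times>\<times> G) U) = comm_subgroup G (k1 G U)"
proof -
  interpret group G by fact
  interpret GG: group "G \<times>\<times> G" by (rule DirProd_group) (fact grp)+
  interpret U: subgroup U "G \<times>\<times> G" by fact
  define K where "K = k1 G U"
  have KI: "x \<in> K \<longleftrightarrow> x \<in> carrier G \<and> (x, \<one>) \<in> U" for x unfolding K_def k1_def by auto
  have Uc: "a \<in> carrier G \<and> b \<in> carrier G" if "(a, b) \<in> U" for a b using U.subset that by auto
  have Uinv: "(inv a, inv b) \<in> U" if "(a, b) \<in> U" for a b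
    using U.m_inv_closed[OF that] Uc[OF that] by (simp add: inv_DirProd[OF grp grp])
  have Umult: "(a \<otimes> c, b \<otimes> d) \<in> U" if "(a, b) \<in> U" "(c, d) \<in> U" for a b c d
    using U.m_closed[OF that] by simp
  have Knorm: "h \<otimes> x \<otimes> inv h \<in> K" if xh: "x \<in> K" "h \<in> carrier G" for x h
  proof -
    obtain b where b: "b \<in> carrier G" "(h, b) \<in> U" using sur[OF xh(2)] by blast
    have "(h \<otimes> x \<otimes> inv h, b \<otimes> \<one> \<otimes> inv b) \<in> U"
      using Umult[OF Umult[OF b(2)] Uinv[OF b(2)]] xh(1) KI by blast
    then show ?thesis using b xh KI by simp
  qed
  define gens where "gens = (\<Union>x\<in>K. \<Union>g\<in>carrier G. {inv x \<otimes> inv g \<otimes> x \<otimes> g})"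
  have Ndef: "comm_subgroup G K = generate G gens" unfolding comm_subgroup_def gens_def by simp
  have gc: "gens \<subseteq> carrier G" unfolding gens_def
  proof (intro UN_least)
    fix x g assume "x \<in> K" "g \<in> carrier G"
    then show "{inv x \<otimes> inv g \<otimes> x \<otimes> g} \<subseteq> carrier G" using KI by simp
  qed
  have Nnorm: "generate G gens \<lhd> G"
  proof (rule normal_generateI[OF gc])
    fix h g assume "h \<in> gens" "g \<in> carrier G"
    then obtain x y where xy: "x \<in> K" "y \<in> carrier G" "h = inv x \<otimes> inv y \<otimes> x \<otimes> y"
      unfolding gens_def by blast
    have "g \<otimes> h \<otimes> inv g = inv (g \<otimes> x \<otimes> inv g) \<otimes> inv (g \<otimes> y \<otimes> inv g) \<otimes> (g \<otimes> x \<otimes> inv g) \<otimes> (g \<otimes> y \<otimes> inv g)"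
      using conj_comm[of x y g] xy KI \<open>g \<in> carrier G\<close> by simp
    then show "g \<otimes> h \<otimes> inv g \<in> gens" unfolding gens_def
      using Knorm[OF xy(1) \<open>g \<in> carrier G\<close>] xy(2) \<open>g \<in> carrier G\<close> by blast
  qed
  define N where "N = generate G gens"
  interpret N: normal N G using Nnorm N_def by simp
  have "k1 G (derived (G \<times>\<times> G) U) = comm_subgroup G K"
  proof
    show "comm_subgroup G K \<subseteq> k1 G (derived (G \<times>\<times> G) U)"
      unfolding Ndef
    proof (rule generate_subgroup_incl)
      show "subgroup (k1 G (derived (G \<times>\<times> G) U)) G"
        unfolding k1_def using k1_sub[OF grp grp GG.derived_is_subgroup[OF U.subset]] by simp
      show "gens \<subseteq> k1 G (derived (G \<times>\<times> G) U)"
      proof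
        fix h assume "h \<in> gens"
        then obtain x y where xy: "x \<in> K" "y \<in> carrier G" "h = inv x \<otimes> inv y \<otimes> x \<otimes> y"
          unfolding gens_def by blast
        obtain b where b: "b \<in> carrier G" "(y, b) \<in> U" using sur[OF xy(2)] by blast
        have x: "x \<in> carrier G" "(x, \<one>) \<in> U" using xy KI by auto
        define h1 where "h1 = (inv x, \<one>)"
        define h2 where "h2 = (inv y, inv b)"
        have h12: "h1 \<in> U" "h2 \<in> U" unfolding h1_def h2_def using Uinv[OF x(2)] Uinv[OF b(2)] by auto
        have "h1 \<otimes>\<^bsub>G \<times>\<times> G\<^esub> h2 \<otimes>\<^bsub>G \<times>\<times> G\<^esub> inv\<^bsub>G \<times>\<times> G\<^esub> h1 \<otimes>\<^bsub>G \<times>\<times> G\<^esub> inv\<^bsub>G \<times>\<times> G\<^esub> h2 = (h, \<one>)"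
          unfolding h1_def h2_def using x b xy by (simp add: inv_DirProd[OF grp grp] gnorm)
        then have "(h, \<one>) \<in> derived (G \<times>\<times> G) U" unfolding derived_def
          using h12 by (metis (no_types, lifting) UN_iff generate.incl singletonI)
        then show "h \<in> k1 G (derived (G \<times>\<times> G) U)" unfolding k1_def using xy x by auto
      qed
    qed
  next
    show "k1 G (derived (G \<times>\<times> G) U) \<subseteq> comm_subgroup G K"
    proof -
      define Q where "Q = G Mod N"
      interpret Q: group Q unfolding Q_def by (rule N.factorgroup_is_group)
      define \<pi> where "\<pi> = (\<lambda>a. N #> a)"
      interpret pi: group_hom G Q \<pi>
        by (intro group_hom.intro group_hom_axioms.intro is_group Q.is_group)
           (unfold Q_def \<pi>_def, rule N.r_coset_hom_Mod)
      interpret sg: group_hom G G \<sigma>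
        by (intro group_hom.intro group_hom_axioms.intro is_group sig)
      have piN: "\<pi> a = \<one>\<^bsub>Q\<^esub> \<longleftrightarrow> a \<in> N" if "a \<in> carrier G" for a
        unfolding Q_def \<pi>_def using coset_join1[OF _ that N.subgroup_axioms]
          coset_join2[OF that N.subgroup_axioms] by auto
      have Qcarr: "carrier Q = \<pi> ` carrier G"
        unfolding Q_def \<pi>_def by (rule carrier_FactGroup)
      have central: "\<pi> x \<otimes>\<^bsub>Q\<^esub> z = z \<otimes>\<^bsub>Q\<^esub> \<pi> x" if xz: "x \<in> K" "z \<in> carrier Q" for x z
      proof -
        obtain g where g: "g \<in> carrier G" "z = \<pi> g" using xz(2) Qcarr by auto
        have xc: "x \<in> carrier G" using xz KI by auto
        have "inv x \<otimes> inv g \<otimes> x \<otimes> g \<in> N"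
          unfolding N_def gens_def using xz(1) g(1) by (blast intro: generate.incl)
        then have "\<pi> (inv x \<otimes> inv g \<otimes> x \<otimes> g) = \<one>\<^bsub>Q\<^esub>"
          using piN[of "inv x \<otimes> inv g \<otimes> x \<otimes> g"] xc g by (simp del: pi.hom_mult)
        moreover have "\<pi> (inv x \<otimes> inv g \<otimes> x \<otimes> g) = inv\<^bsub>Q\<^esub> (\<pi> x) \<otimes>\<^bsub>Q\<^esub> inv\<^bsub>Q\<^esub> (\<pi> g) \<otimes>\<^bsub>Q\<^esub> \<pi> x \<otimes>\<^bsub>Q\<^esub> \<pi> g"
          using xc g by simp
        ultimately have "inv\<^bsub>Q\<^esub> (\<pi> x) \<otimes>\<^bsub>Q\<^esub> inv\<^bsub>Q\<^esub> (\<pi> g) \<otimes>\<^bsub>Q\<^esub> \<pi> x \<otimes>\<^bsub>Q\<^esub> \<pi> g = \<one>\<^bsub>Q\<^esub>"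
          by simp
        then have "\<pi> x \<otimes>\<^bsub>Q\<^esub> \<pi> g = \<pi> g \<otimes>\<^bsub>Q\<^esub> \<pi> x"
          by (intro Q.comm_one_imp pi.hom_closed xc g(1))
        then show ?thesis using g(2) by simp
      qed
      define S where "S = {u \<in> U. \<pi> (fst u) = \<pi> (\<sigma> (snd u))}"
      have Ssub: "subgroup S (G \<times>\<times> G)"
      proof (rule GG.subgroupI)
        show "S \<subseteq> carrier (G \<times>\<times> G)" unfolding S_def using U.subset by auto
        have "(\<one>, \<one>) \<in> S" unfolding S_def using U.one_closed by simp
        then show "S \<noteq> {}" by blast
      next
        fix u assume u: "u \<in> S"
        obtain a b where ab: "u = (a, b)" by fastforce
        have abU: "(a, b) \<in> U" and e: "\<pi> a = \<pi> (\<sigma> b)" using u ab unfolding S_def by auto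
        have c: "a \<in> carrier G" "b \<in> carrier G" using Uc[OF abU] by auto
        show "inv\<^bsub>G \<times>\<times> G\<^esub> u \<in> S" unfolding S_def ab
          using Uinv[OF abU] c e by (simp add: inv_DirProd[OF grp grp])
      next
        fix u v assume u: "u \<in> S" and v: "v \<in> S"
        obtain a b where ab: "u = (a, b)" by fastforce
        obtain c d where cd: "v = (c, d)" by fastforce
        have abU: "(a, b) \<in> U" and e: "\<pi> a = \<pi> (\<sigma> b)" using u ab unfolding S_def by auto
        have cdU: "(c, d) \<in> U" and e2: "\<pi> c = \<pi> (\<sigma> d)" using v cd unfolding S_def by auto
        have c: "a \<in> carrier G" "b \<in> carrier G" "c \<in> carrier G" "d \<in> carrier G"
          using Uc[OF abU] Uc[OF cdU] by auto
        show "u \<otimes>\<^bsub>G \<times>\<times> G\<^esub> v \<in> S" unfolding S_def ab cd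
          using Umult[OF abU cdU] c e e2 by simp
      qed
      have decomp: "\<pi> a = \<pi> (\<sigma> b) \<otimes>\<^bsub>Q\<^esub> \<pi> (inv (\<sigma> b) \<otimes> a) \<and> inv (\<sigma> b) \<otimes> a \<in> K"
        if abU: "(a, b) \<in> U" for a b
      proof
        have c: "a \<in> carrier G" "b \<in> carrier G" using Uc[OF abU] by auto
        have "\<sigma> b \<otimes> (inv (\<sigma> b) \<otimes> a) = a" using c by (simp add: canc1)
        then show "\<pi> a = \<pi> (\<sigma> b) \<otimes>\<^bsub>Q\<^esub> \<pi> (inv (\<sigma> b) \<otimes> a)"
          using c by (metis pi.hom_mult sg.hom_closed inv_closed m_closed)
        have "(inv (\<sigma> b) \<otimes> a, inv b \<otimes> b) \<in> U"
          using Umult[OF Uinv[OF sec[OF c(2)]] abU] .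
        then show "inv (\<sigma> b) \<otimes> a \<in> K" using KI c by simp
      qed
      have dsS: "derived_set (G \<times>\<times> G) U \<subseteq> S"
      proof (intro UN_least subsetI)
        fix u v w assume u: "u \<in> U" and v: "v \<in> U"
          and w: "w \<in> {u \<otimes>\<^bsub>G \<times>\<times> G\<^esub> v \<otimes>\<^bsub>G \<times>\<times> G\<^esub> inv\<^bsub>G \<times>\<times> G\<^esub> u \<otimes>\<^bsub>G \<times>\<times> G\<^esub> inv\<^bsub>G \<times>\<times> G\<^esub> v}"
        obtain a b where ab: "u = (a, b)" by fastforce
        obtain c d where cd: "v = (c, d)" by fastforce
        have abU: "(a, b) \<in> U" and cdU: "(c, d) \<in> U" using u v ab cd by auto
        have cc: "a \<in> carrier G" "b \<in> carrier G" "c \<in> carrier G" "d \<in> carrier G"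
          using Uc[OF abU] Uc[OF cdU] by auto
        have wdef: "w = (a \<otimes> c \<otimes> inv a \<otimes> inv c, b \<otimes> d \<otimes> inv b \<otimes> inv d)"
          using w ab cd cc by (simp add: inv_DirProd[OF grp grp])
        have wU: "w \<in> U" using w u v U.m_closed U.m_inv_closed by auto
        define x where "x = inv (\<sigma> b) \<otimes> a"
        define y where "y = inv (\<sigma> d) \<otimes> c"
        have dx: "\<pi> a = \<pi> (\<sigma> b) \<otimes>\<^bsub>Q\<^esub> \<pi> x" "x \<in> K" using decomp[OF abU] x_def by auto
        have dy: "\<pi> c = \<pi> (\<sigma> d) \<otimes>\<^bsub>Q\<^esub> \<pi> y" "y \<in> K" using decomp[OF cdU] y_def by auto
        have xc: "x \<in> carrier G" "y \<in> carrier G" using dx dy KI by auto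
        have "\<pi> (a \<otimes> c \<otimes> inv a \<otimes> inv c) = \<pi> a \<otimes>\<^bsub>Q\<^esub> \<pi> c \<otimes>\<^bsub>Q\<^esub> inv\<^bsub>Q\<^esub> (\<pi> a) \<otimes>\<^bsub>Q\<^esub> inv\<^bsub>Q\<^esub> (\<pi> c)"
          using cc by simp
        also have "\<dots> = \<pi> (\<sigma> b) \<otimes>\<^bsub>Q\<^esub> \<pi> (\<sigma> d) \<otimes>\<^bsub>Q\<^esub> inv\<^bsub>Q\<^esub> (\<pi> (\<sigma> b)) \<otimes>\<^bsub>Q\<^esub> inv\<^bsub>Q\<^esub> (\<pi> (\<sigma> d))"
          unfolding dx(1) dy(1)
          by (rule Q.comm_central) (use cc xc central dx(2) dy(2) in auto)
        also have "\<dots> = \<pi> (\<sigma> (b \<otimes> d \<otimes> inv b \<otimes> inv d))" using cc by simp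
        finally show "w \<in> S" unfolding S_def using wU wdef by simp
      qed
      have dS: "derived (G \<times>\<times> G) U \<subseteq> S"
        unfolding derived_def by (rule GG.generate_subgroup_incl[OF dsS Ssub])
      show ?thesis
      proof
        fix g assume "g \<in> k1 G (derived (G \<times>\<times> G) U)"
        then have g: "g \<in> carrier G" "(g, \<one>) \<in> S" using dS unfolding k1_def by auto
        then have "\<pi> g = \<one>\<^bsub>Q\<^esub>" unfolding S_def by simp
        then show "g \<in> comm_subgroup G K" using piN g Ndef N_def by simp
      qed
    qed
  qed
  then show ?thesis by (simp add: K_def)
qed
lemma k2_sub:
  assumes "group G" "group G" "subgroup V (G \<times>\<times> G)"
  shows "subgroup {g \<in> carrier G. (\<one>\<^bsub>G\<^esub>, g) \<in> V} G"
proof -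
  interpret G: group G by fact
  interpret H: group G by fact
  interpret V: subgroup V "G \<times>\<times> G" by fact
  show ?thesis
  proof (rule G.subgroupI)
    show "{g \<in> carrier G. (\<one>\<^bsub>G\<^esub>, g) \<in> V} \<noteq> {}"
      using V.one_closed by auto
  next
    fix a assume a: "a \<in> {g \<in> carrier G. (\<one>\<^bsub>G\<^esub>, g) \<in> V}"
    then have "inv\<^bsub>G \<times>\<times> G\<^esub> (\<one>\<^bsub>G\<^esub>, a) \<in> V" by (intro V.m_inv_closed) auto
    then show "inv\<^bsub>G\<^esub> a \<in> {g \<in> carrier G. (\<one>\<^bsub>G\<^esub>, g) \<in> V}"
      using a by (simp add: inv_DirProd[OF assms(1,2)])
  next
    fix a b assume "a \<in> {g \<in> carrier G. (\<one>\<^bsub>G\<^esub>, g) \<in> V}" "b \<in> {g \<in> carrier G. (\<one>\<^bsub>G\<^esub>, g) \<in> V}"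
    then show "a \<otimes>\<^bsub>G\<^esub> b \<in> {g \<in> carrier G. (\<one>\<^bsub>G\<^esub>, g) \<in> V}"
      using V.m_closed[of "(\<one>\<^bsub>G\<^esub>, a)" "(\<one>\<^bsub>G\<^esub>, b)"] by auto
  qed auto
qed

lemma k2_main:
  fixes G (structure)
  assumes grp: "group G" and U: "subgroup U (G \<times>\<times> G)" and sig: "\<sigma> \<in> hom G G"
    and sec: "\<And>b. b \<in> carrier G \<Longrightarrow> (b, \<sigma> b) \<in> U"
    and sur: "\<And>h. h \<in> carrier G \<Longrightarrow> \<exists>b\<in>carrier G. (b, h) \<in> U"
  shows "k2 G (derived (G \<times>\<times> G) U) = comm_subgroup G (k2 G U)"
proof -
  interpret group G by fact
  interpret GG: group "G \<times>\<times> G" by (rule DirProd_group) (fact grp)+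
  interpret U: subgroup U "G \<times>\<times> G" by fact
  define K where "K = k2 G U"
  have KI: "x \<in> K \<longleftrightarrow> x \<in> carrier G \<and> (\<one>, x) \<in> U" for x unfolding K_def k2_def by auto
  have Uc: "a \<in> carrier G \<and> b \<in> carrier G" if "(a, b) \<in> U" for a b using U.subset that by auto
  have Uinv: "(inv a, inv b) \<in> U" if "(a, b) \<in> U" for a b
    using U.m_inv_closed[OF that] Uc[OF that] by (simp add: inv_DirProd[OF grp grp])
  have Umult: "(a \<otimes> c, b \<otimes> d) \<in> U" if "(a, b) \<in> U" "(c, d) \<in> U" for a b c d
    using U.m_closed[OF that] by simp
  have Knorm: "h \<otimes> x \<otimes> inv h \<in> K" if xh: "x \<in> K" "h \<in> carrier G" for x h
  proof -
    obtain b where b: "b \<in> carrier G" "(b, h) \<in> U" using sur[OF xh(2)] by blast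
    have "(b \<otimes> \<one> \<otimes> inv b, h \<otimes> x \<otimes> inv h) \<in> U"
      using Umult[OF Umult[OF b(2)] Uinv[OF b(2)]] xh(1) KI by blast
    then show ?thesis using b xh KI by simp
  qed
  define gens where "gens = (\<Union>x\<in>K. \<Union>g\<in>carrier G. {inv x \<otimes> inv g \<otimes> x \<otimes> g})"
  have Ndef: "comm_subgroup G K = generate G gens" unfolding comm_subgroup_def gens_def by simp
  have gc: "gens \<subseteq> carrier G" unfolding gens_def
  proof (intro UN_least)
    fix x g assume "x \<in> K" "g \<in> carrier G"
    then show "{inv x \<otimes> inv g \<otimes> x \<otimes> g} \<subseteq> carrier G" using KI by simp
  qed
  have Nnorm: "generate G gens \<lhd> G"
  proof (rule normal_generateI[OF gc])
    fix h g assume "h \<in> gens" "g \<in> carrier G"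
    then obtain x y where xy: "x \<in> K" "y \<in> carrier G" "h = inv x \<otimes> inv y \<otimes> x \<otimes> y"
      unfolding gens_def by blast
    have "g \<otimes> h \<otimes> inv g = inv (g \<otimes> x \<otimes> inv g) \<otimes> inv (g \<otimes> y \<otimes> inv g) \<otimes> (g \<otimes> x \<otimes> inv g) \<otimes> (g \<otimes> y \<otimes> inv g)"
      using conj_comm[of x y g] xy KI \<open>g \<in> carrier G\<close> by simp
    then show "g \<otimes> h \<otimes> inv g \<in> gens" unfolding gens_def
      using Knorm[OF xy(1) \<open>g \<in> carrier G\<close>] xy(2) \<open>g \<in> carrier G\<close> by blast
  qed
  define N where "N = generate G gens"
  interpret N: normal N G using Nnorm N_def by simp
  have "k2 G (derived (G \<times>\<times> G) U) = comm_subgroup G K"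
  proof
    show "comm_subgroup G K \<subseteq> k2 G (derived (G \<times>\<times> G) U)"
      unfolding Ndef
    proof (rule generate_subgroup_incl)
      show "subgroup (k2 G (derived (G \<times>\<times> G) U)) G"
        unfolding k2_def using k2_sub[OF grp grp GG.derived_is_subgroup[OF U.subset]] by simp
      show "gens \<subseteq> k2 G (derived (G \<times>\<times> G) U)"
      proof
        fix h assume "h \<in> gens"
        then obtain x y where xy: "x \<in> K" "y \<in> carrier G" "h = inv x \<otimes> inv y \<otimes> x \<otimes> y"
          unfolding gens_def by blast
        obtain b where b: "b \<in> carrier G" "(b, y) \<in> U" using sur[OF xy(2)] by blast
        have x: "x \<in> carrier G" "(\<one>, x) \<in> U" using xy KI by auto
        define h1 where "h1 = (\<one>, inv x)"
        define h2 where "h2 = (inv b, inv y)"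
        have h12: "h1 \<in> U" "h2 \<in> U" unfolding h1_def h2_def using Uinv[OF x(2)] Uinv[OF b(2)] by auto
        have "h1 \<otimes>\<^bsub>G \<times>\<times> G\<^esub> h2 \<otimes>\<^bsub>G \<times>\<times> G\<^esub> inv\<^bsub>G \<times>\<times> G\<^esub> h1 \<otimes>\<^bsub>G \<times>\<times> G\<^esub> inv\<^bsub>G \<times>\<times> G\<^esub> h2 = (\<one>, h)"
          unfolding h1_def h2_def using x b xy by (simp add: inv_DirProd[OF grp grp] gnorm)
        then have "(\<one>, h) \<in> derived (G \<times>\<times> G) U" unfolding derived_def
          using h12 by (metis (no_types, lifting) UN_iff generate.incl singletonI)
        then show "h \<in> k2 G (derived (G \<times>\<times> G) U)" unfolding k2_def using xy x by auto
      qed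
    qed
  next
    show "k2 G (derived (G \<times>\<times> G) U) \<subseteq> comm_subgroup G K"
    proof -
      define Q where "Q = G Mod N"
      interpret Q: group Q unfolding Q_def by (rule N.factorgroup_is_group)
      define \<pi> where "\<pi> = (\<lambda>a. N #> a)"
      interpret pi: group_hom G Q \<pi>
        by (intro group_hom.intro group_hom_axioms.intro is_group Q.is_group)
           (unfold Q_def \<pi>_def, rule N.r_coset_hom_Mod)
      interpret sg: group_hom G G \<sigma>
        by (intro group_hom.intro group_hom_axioms.intro is_group sig)
      have piN: "\<pi> a = \<one>\<^bsub>Q\<^esub> \<longleftrightarrow> a \<in> N" if "a \<in> carrier G" for a
        unfolding Q_def \<pi>_def using coset_join1[OF _ that N.subgroup_axioms]
          coset_join2[OF that N.subgroup_axioms] by auto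
      have Qcarr: "carrier Q = \<pi> ` carrier G"
        unfolding Q_def \<pi>_def by (rule carrier_FactGroup)
      have central: "\<pi> x \<otimes>\<^bsub>Q\<^esub> z = z \<otimes>\<^bsub>Q\<^esub> \<pi> x" if xz: "x \<in> K" "z \<in> carrier Q" for x z
      proof -
        obtain g where g: "g \<in> carrier G" "z = \<pi> g" using xz(2) Qcarr by auto
        have xc: "x \<in> carrier G" using xz KI by auto
        have "inv x \<otimes> inv g \<otimes> x \<otimes> g \<in> N"
          unfolding N_def gens_def using xz(1) g(1) by (blast intro: generate.incl)
        then have "\<pi> (inv x \<otimes> inv g \<otimes> x \<otimes> g) = \<one>\<^bsub>Q\<^esub>"
          using piN[of "inv x \<otimes> inv g \<otimes> x \<otimes> g"] xc g by (simp del: pi.hom_mult)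
        moreover have "\<pi> (inv x \<otimes> inv g \<otimes> x \<otimes> g) = inv\<^bsub>Q\<^esub> (\<pi> x) \<otimes>\<^bsub>Q\<^esub> inv\<^bsub>Q\<^esub> (\<pi> g) \<otimes>\<^bsub>Q\<^esub> \<pi> x \<otimes>\<^bsub>Q\<^esub> \<pi> g"
          using xc g by simp
        ultimately have "inv\<^bsub>Q\<^esub> (\<pi> x) \<otimes>\<^bsub>Q\<^esub> inv\<^bsub>Q\<^esub> (\<pi> g) \<otimes>\<^bsub>Q\<^esub> \<pi> x \<otimes>\<^bsub>Q\<^esub> \<pi> g = \<one>\<^bsub>Q\<^esub>"
          by simp
        then have "\<pi> x \<otimes>\<^bsub>Q\<^esub> \<pi> g = \<pi> g \<otimes>\<^bsub>Q\<^esub> \<pi> x"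
          by (intro Q.comm_one_imp pi.hom_closed xc g(1))
        then show ?thesis using g(2) by simp
      qed
      define S where "S = {u \<in> U. \<pi> (snd u) = \<pi> (\<sigma> (fst u))}"
      have Ssub: "subgroup S (G \<times>\<times> G)"
      proof (rule GG.subgroupI)
        show "S \<subseteq> carrier (G \<times>\<times> G)" unfolding S_def using U.subset by auto
        have "(\<one>, \<one>) \<in> S" unfolding S_def using U.one_closed by simp
        then show "S \<noteq> {}" by blast
      next
        fix u assume u: "u \<in> S"
        obtain a b where ab: "u = (a, b)" by fastforce
        have abU: "(a, b) \<in> U" and e: "\<pi> b = \<pi> (\<sigma> a)" using u ab unfolding S_def by auto
        have c: "a \<in> carrier G" "b \<in> carrier G" using Uc[OF abU] by auto
        show "inv\<^bsub>G \<times>\<times> G\<^esub> u \<in> S" unfolding S_def ab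
          using Uinv[OF abU] c e by (simp add: inv_DirProd[OF grp grp])
      next
        fix u v assume u: "u \<in> S" and v: "v \<in> S"
        obtain a b where ab: "u = (a, b)" by fastforce
        obtain c d where cd: "v = (c, d)" by fastforce
        have abU: "(a, b) \<in> U" and e: "\<pi> b = \<pi> (\<sigma> a)" using u ab unfolding S_def by auto
        have cdU: "(c, d) \<in> U" and e2: "\<pi> d = \<pi> (\<sigma> c)" using v cd unfolding S_def by auto
        have c: "a \<in> carrier G" "b \<in> carrier G" "c \<in> carrier G" "d \<in> carrier G"
          using Uc[OF abU] Uc[OF cdU] by auto
        show "u \<otimes>\<^bsub>G \<times>\<times> G\<^esub> v \<in> S" unfolding S_def ab cd
          using Umult[OF abU cdU] c e e2 by simp
      qed
      have decomp: "\<pi> b = \<pi> (\<sigma> a) \<otimes>\<^bsub>Q\<^esub> \<pi> (inv (\<sigma> a) \<otimes> b) \<and> inv (\<sigma> a) \<otimes> b \<in> K"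
        if abU: "(a, b) \<in> U" for a b
      proof
        have c: "a \<in> carrier G" "b \<in> carrier G" using Uc[OF abU] by auto
        have "\<sigma> a \<otimes> (inv (\<sigma> a) \<otimes> b) = b" using c by (simp add: canc1)
        then show "\<pi> b = \<pi> (\<sigma> a) \<otimes>\<^bsub>Q\<^esub> \<pi> (inv (\<sigma> a) \<otimes> b)"
          using c by (metis pi.hom_mult sg.hom_closed inv_closed m_closed)
        have "(inv a \<otimes> a, inv (\<sigma> a) \<otimes> b) \<in> U"
          using Umult[OF Uinv[OF sec[OF c(1)]] abU] .
        then show "inv (\<sigma> a) \<otimes> b \<in> K" using KI c by simp
      qed
      have dsS: "derived_set (G \<times>\<times> G) U \<subseteq> S"
      proof (intro UN_least subsetI)
        fix u v w assume u: "u \<in> U" and v: "v \<in> U"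
          and w: "w \<in> {u \<otimes>\<^bsub>G \<times>\<times> G\<^esub> v \<otimes>\<^bsub>G \<times>\<times> G\<^esub> inv\<^bsub>G \<times>\<times> G\<^esub> u \<otimes>\<^bsub>G \<times>\<times> G\<^esub> inv\<^bsub>G \<times>\<times> G\<^esub> v}"
        obtain a b where ab: "u = (a, b)" by fastforce
        obtain c d where cd: "v = (c, d)" by fastforce
        have abU: "(a, b) \<in> U" and cdU: "(c, d) \<in> U" using u v ab cd by auto
        have cc: "a \<in> carrier G" "b \<in> carrier G" "c \<in> carrier G" "d \<in> carrier G"
          using Uc[OF abU] Uc[OF cdU] by auto
        have wdef: "w = (a \<otimes> c \<otimes> inv a \<otimes> inv c, b \<otimes> d \<otimes> inv b \<otimes> inv d)"
          using w ab cd cc by (simp add: inv_DirProd[OF grp grp])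
        have wU: "w \<in> U" using w u v U.m_closed U.m_inv_closed by auto
        define x where "x = inv (\<sigma> a) \<otimes> b"
        define y where "y = inv (\<sigma> c) \<otimes> d"
        have dx: "\<pi> b = \<pi> (\<sigma> a) \<otimes>\<^bsub>Q\<^esub> \<pi> x" "x \<in> K" using decomp[OF abU] x_def by auto
        have dy: "\<pi> d = \<pi> (\<sigma> c) \<otimes>\<^bsub>Q\<^esub> \<pi> y" "y \<in> K" using decomp[OF cdU] y_def by auto
        have xc: "x \<in> carrier G" "y \<in> carrier G" using dx dy KI by auto
        have "\<pi> (b \<otimes> d \<otimes> inv b \<otimes> inv d) = \<pi> b \<otimes>\<^bsub>Q\<^esub> \<pi> d \<otimes>\<^bsub>Q\<^esub> inv\<^bsub>Q\<^esub> (\<pi> b) \<otimes>\<^bsub>Q\<^esub> inv\<^bsub>Q\<^esub> (\<pi> d)"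
          using cc by simp
        also have "\<dots> = \<pi> (\<sigma> a) \<otimes>\<^bsub>Q\<^esub> \<pi> (\<sigma> c) \<otimes>\<^bsub>Q\<^esub> inv\<^bsub>Q\<^esub> (\<pi> (\<sigma> a)) \<otimes>\<^bsub>Q\<^esub> inv\<^bsub>Q\<^esub> (\<pi> (\<sigma> c))"
          unfolding dx(1) dy(1)
          by (rule Q.comm_central) (use cc xc central dx(2) dy(2) in auto)
        also have "\<dots> = \<pi> (\<sigma> (a \<otimes> c \<otimes> inv a \<otimes> inv c))" using cc by simp
        finally show "w \<in> S" unfolding S_def using wU wdef by simp
      qed
      have dS: "derived (G \<times>\<times> G) U \<subseteq> S"
        unfolding derived_def by (rule GG.generate_subgroup_incl[OF dsS Ssub])
      show ?thesis
      proof
        fix g assume "g \<in> k2 G (derived (G \<times>\<times> G) U)"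
        then have g: "g \<in> carrier G" "(\<one>, g) \<in> S" using dS unfolding k2_def by auto
        then have "\<pi> g = \<one>\<^bsub>Q\<^esub>" unfolding S_def by simp
        then show "g \<in> comm_subgroup G K" using piN g Ndef N_def by simp
      qed
    qed
  qed
  then show ?thesis by (simp add: K_def)
qed

theorem proposition5p2:
  fixes G :: "('a, 'b) monoid_scheme" and \<phi> :: "'a \<Rightarrow> 'a" and U :: "('a \<times> 'a) set"
  assumes "group G" and "finite (carrier G)"
    and "\<phi> \<in> iso G G"
    and "subgroup U (G \<times>\<times> G)"
    and "twisted_diag G \<phi> \<subseteq> U"
  shows "k1 G (derived (G \<times>\<times> G) U) = comm_subgroup G (k1 G U) \<and>
         k2 G (derived (G \<times>\<times> G) U) = comm_subgroup G (k2 G U)"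
proof -
  interpret group G by fact
  define \<sigma> where "\<sigma> = inv_into (carrier G) \<phi>"
  have bij: "bij_betw \<phi> (carrier G) (carrier G)" using assms(3) unfolding iso_def by auto
  have sig: "\<sigma> \<in> iso G G" unfolding \<sigma>_def by (rule iso_set_sym[OF assms(3)])
  have phihom: "\<phi> \<in> hom G G" using assms(3) unfolding iso_def by auto
  have sighom: "\<sigma> \<in> hom G G" using sig unfolding iso_def by auto
  have diag: "(g, \<phi> g) \<in> U" if "g \<in> carrier G" for g
    using assms(5) that unfolding twisted_diag_def by auto
  have sc: "\<sigma> b \<in> carrier G" if "b \<in> carrier G" for b
    using sighom that unfolding hom_def by auto
  have ps: "\<phi> (\<sigma> b) = b" if "b \<in> carrier G" for b
    unfolding \<sigma>_def using bij that by (metis bij_betw_def f_inv_into_f)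
  have A: "k1 G (derived (G \<times>\<times> G) U) = comm_subgroup G (k1 G U)"
  proof (rule k1_main[OF assms(1,4) sighom])
    fix b assume "b \<in> carrier G"
    then show "(\<sigma> b, b) \<in> U" using diag[OF sc] ps by metis
  next
    fix h assume "h \<in> carrier G"
    then show "\<exists>b\<in>carrier G. (h, b) \<in> U" using diag phihom unfolding hom_def by auto
  qed
  have B: "k2 G (derived (G \<times>\<times> G) U) = comm_subgroup G (k2 G U)"
  proof (rule k2_main[OF assms(1,4) phihom])
    fix b assume "b \<in> carrier G"
    then show "(b, \<phi> b) \<in> U" using diag by metis
  next
    fix h assume "h \<in> carrier G"
    then show "\<exists>b\<in>carrier G. (b, h) \<in> U" using diag[OF sc] ps sc by metis
  qed
  show ?thesis using A B by simp
qed
end
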